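(* Let $G=(V,E)$ be a non-empty finite simple graph with no isolated vertices and no isolated edges, and let $A$ be any set of vertices of $G$ each of which is adjacent to a vertex of degree $1$. Then \[ D_G(x)=\sum_{J\subseteq V\setminus A}(-1)^{|J|}(x+1)^{|V|-|N_G[J]|}=\sum_{\substack{J\subseteq V\setminus A\\|J|\le|V|-\delta(G)}}(-1)^{|J|}\Big[(x+1)^{|V|-|N_G[J]|}-1\Big]. \]
   Context: The domination polynomial is $D_G(x)=\sum_{k=0}^{|V|}d_k(G)x^k$, where $d_k(G)$ is the number of dominating sets of $G$ of cardinality $k$ (a set $S$ is dominating if every vertex not in $S$ is adjacent to a vertex of $S$). $N_G[J]$ is the closed neighbourhood of $J$ (vertices in $J$ or adjacent to a vertex of $J$), and $\delta(G)$ is the minimum degree. An isolated edge is an edge both of whose endpoints have degree $1$. *)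

theory Defs
  imports "HOL-Computational_Algebra.Polynomial"
begin

definition simple_graph :: "'a set \<Rightarrow> ('a \<Rightarrow> 'a \<Rightarrow> bool) \<Rightarrow> bool" where
  "simple_graph V E \<longleftrightarrow> finite V \<and> (\<forall>u v. E u v \<longrightarrow> u \<in> V \<and> v \<in> V)
     \<and> (\<forall>u v. E u v \<longrightarrow> E v u) \<and> (\<forall>v. \<not> E v v)"

definition degree :: "'a set \<Rightarrow> ('a \<Rightarrow> 'a \<Rightarrow> bool) \<Rightarrow> 'a \<Rightarrow> nat" where
  "degree V E v = card {u \<in> V. E v u}"

definition min_degree :: "'a set \<Rightarrow> ('a \<Rightarrow> 'a \<Rightarrow> bool) \<Rightarrow> nat" where
  "min_degree V E = Min (degree V E ` V)"

definition closed_nbhd :: "'a set \<Rightarrow> ('a \<Rightarrow> 'a \<Rightarrow> bool) \<Rightarrow> 'a set \<Rightarrow> 'a set" where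
  "closed_nbhd V E J = J \<union> {u \<in> V. \<exists>j\<in>J. E j u}"

definition dominating :: "'a set \<Rightarrow> ('a \<Rightarrow> 'a \<Rightarrow> bool) \<Rightarrow> 'a set \<Rightarrow> bool" where
  "dominating V E S \<longleftrightarrow> S \<subseteq> V \<and> (\<forall>v \<in> V - S. \<exists>s \<in> S. E v s)"

definition num_dom_sets :: "'a set \<Rightarrow> ('a \<Rightarrow> 'a \<Rightarrow> bool) \<Rightarrow> nat \<Rightarrow> nat" where
  "num_dom_sets V E k = card {S. S \<subseteq> V \<and> dominating V E S \<and> card S = k}"

definition dom_poly :: "'a set \<Rightarrow> ('a \<Rightarrow> 'a \<Rightarrow> bool) \<Rightarrow> int poly" where
  "dom_poly V E = (\<Sum>k\<le>card V. monom (int (num_dom_sets V E k)) k)"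

end

theory Submission
  imports Defs
begin

lemma pow_sum_subsets:
  fixes x :: "'b::comm_semiring_1"
  assumes "finite T"
  shows "(1 + x) ^ card T = (\<Sum>S\<in>Pow T. x ^ card S)"
proof -
  have "(1 + x) ^ card T = (\<Prod>t\<in>T. x + 1)" by (simp add: add.commute)
  also have "\<dots> = (\<Sum>S\<in>Pow T. (\<Prod>t\<in>S. x) * (\<Prod>t\<in>T-S. 1))"
    by (rule prod_add[OF assms])
  finally show ?thesis by simp
qed

lemma incl_excl_prod:
  fixes f :: "'a \<Rightarrow> 'b::comm_ring_1"
  assumes "finite B"
  shows "(\<Prod>v\<in>B. 1 - f v) = (\<Sum>J\<in>Pow B. (-1) ^ card J * (\<Prod>v\<in>J. f v))"
proof -
  have "(\<Prod>v\<in>B. 1 - f v) = (\<Prod>v\<in>B. (- f v) + 1)" by simp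
  also have "\<dots> = (\<Sum>J\<in>Pow B. (\<Prod>v\<in>J. - f v) * (\<Prod>v\<in>B-J. 1))"
    by (rule prod_add[OF assms])
  also have "\<dots> = (\<Sum>J\<in>Pow B. (-1) ^ card J * (\<Prod>v\<in>J. f v))"
  proof (rule sum.cong[OF refl])
    fix J assume "J \<in> Pow B"
    have fJ: "finite J" using \<open>J \<in> Pow B\<close> assms finite_subset by auto
    have "(\<Prod>v\<in>J. - f v) = (-1) ^ card J * (\<Prod>v\<in>J. f v)"
      using fJ by (induction J rule: finite_induct) auto
    thus "(\<Prod>v\<in>J. - f v) * (\<Prod>v\<in>B-J. 1) = (-1) ^ card J * (\<Prod>v\<in>J. f v)" by simp
  qed
  finally show ?thesis .
qed

lemma sum_of_bool_filter:
  assumes "finite A"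
  shows "(\<Sum>x\<in>A. of_bool (P x) * (g x::'b::comm_ring_1)) = (\<Sum>x\<in>{x\<in>A. P x}. g x)"
proof -
  have "(\<Sum>x\<in>A. of_bool (P x) * g x) = (\<Sum>x\<in>A. if P x then g x else 0)"
    by (rule sum.cong) auto
  also have "\<dots> = (\<Sum>x\<in>{x\<in>A. P x}. g x)" by (simp add: sum.inter_filter assms)
  finally show ?thesis .
qed

lemma dom_poly_alt:
  assumes "finite V"
  shows "dom_poly V E = (\<Sum>S\<in>Pow V. of_bool (dominating V E S) * [:0,1:] ^ card S)"
proof -
  let ?D = "{S\<in>Pow V. dominating V E S}"
  have fD: "finite ?D" using assms by simp
  have "(\<Sum>S\<in>Pow V. of_bool (dominating V E S) * [:0,1:] ^ card S)
        = (\<Sum>S\<in>?D. [:0,1:] ^ card S :: int poly)"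
    by (rule sum_of_bool_filter[of "Pow V" "dominating V E"]) (simp add: assms)
  also have "\<dots> = (\<Sum>k\<in>{..card V}. \<Sum>S\<in>{S\<in>?D. card S = k}. [:0,1:] ^ card S)"
    by (rule sum.group[symmetric]) (use assms card_mono in auto)
  also have "\<dots> = dom_poly V E"
    unfolding dom_poly_def
  proof (rule sum.cong[OF refl])
    fix k
    have eq: "{S\<in>?D. card S = k} = {S. S \<subseteq> V \<and> dominating V E S \<and> card S = k}" by auto
    have "(\<Sum>S\<in>{S\<in>?D. card S = k}. [:0,1:] ^ card S :: int poly)
        = (\<Sum>S\<in>{S\<in>?D. card S = k}. [:0,1:] ^ k)" by simp
    also have "\<dots> = of_nat (num_dom_sets V E k) * [:0,1:] ^ k"
      by (simp add: eq num_dom_sets_def)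
    also have "\<dots> = monom (int (num_dom_sets V E k)) k"
      by (simp add: monom_altdef of_nat_poly)
    finally show "(\<Sum>S\<in>{S\<in>?D. card S = k}. [:0,1:] ^ card S) = monom (int (num_dom_sets V E k)) k" .
  qed
  finally show ?thesis ..
qed

lemma closed_nbhd_disjoint:
  "S \<inter> closed_nbhd V E J = {} \<longleftrightarrow> (\<forall>v\<in>J. S \<inter> closed_nbhd V E {v} = {})"
  unfolding closed_nbhd_def by auto

lemma dom_general:
  assumes fin: "finite V" and BV: "B \<subseteq> V"
    and char: "\<And>S. S \<subseteq> V \<Longrightarrow> dominating V E S \<longleftrightarrow> (\<forall>v\<in>B. S \<inter> closed_nbhd V E {v} \<noteq> {})"
    and NV: "\<And>J. J \<subseteq> V \<Longrightarrow> closed_nbhd V E J \<subseteq> V"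
  shows "dom_poly V E = (\<Sum>J\<in>Pow B. (-1) ^ card J * [:1, 1:] ^ (card V - card (closed_nbhd V E J)))"
proof -
  let ?X = "[:0,1:] :: int poly"
  let ?N = "\<lambda>J. closed_nbhd V E J"
  have fB: "finite B" using fin BV finite_subset by blast
  have "dom_poly V E = (\<Sum>S\<in>Pow V. of_bool (dominating V E S) * ?X ^ card S)"
    by (rule dom_poly_alt[OF fin])
  also have "\<dots> = (\<Sum>S\<in>Pow V. (\<Prod>v\<in>B. 1 - of_bool (S \<inter> ?N {v} = {})) * ?X ^ card S)"
  proof (rule sum.cong[OF refl])
    fix S assume "S \<in> Pow V"
    hence "dominating V E S \<longleftrightarrow> (\<forall>v\<in>B. S \<inter> ?N {v} \<noteq> {})" using char by auto
    moreover have "(\<Prod>v\<in>B. 1 - of_bool (S \<inter> ?N {v} = {}) :: int poly)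
        = of_bool (\<forall>v\<in>B. S \<inter> ?N {v} \<noteq> {})"
    proof -
      have "(\<Prod>v\<in>B. 1 - of_bool (S \<inter> ?N {v} = {}) :: int poly)
          = (\<Prod>v\<in>B. of_bool (S \<inter> ?N {v} \<noteq> {}))"
        by (rule prod.cong) auto
      also have "\<dots> = of_bool (\<forall>v\<in>B. S \<inter> ?N {v} \<noteq> {})"
        using fB by (induction B rule: finite_induct) auto
      finally show ?thesis .
    qed
    ultimately show "of_bool (dominating V E S) * ?X ^ card S
        = (\<Prod>v\<in>B. 1 - of_bool (S \<inter> ?N {v} = {})) * ?X ^ card S" by simp
  qed
  also have "\<dots> = (\<Sum>S\<in>Pow V. \<Sum>J\<in>Pow B. (-1) ^ card J * of_bool (S \<inter> ?N J = {}) * ?X ^ card S)"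
  proof (rule sum.cong[OF refl])
    fix S
    have "(\<Prod>v\<in>B. 1 - of_bool (S \<inter> ?N {v} = {})) = 
      (\<Sum>J\<in>Pow B. (-1) ^ card J * (\<Prod>v\<in>J. of_bool (S \<inter> ?N {v} = {}) :: int poly))"
      by (rule incl_excl_prod[OF fB])
    also have "\<dots> = (\<Sum>J\<in>Pow B. (-1) ^ card J * of_bool (S \<inter> ?N J = {}))"
    proof (rule sum.cong[OF refl])
      fix J assume "J \<in> Pow B"
      hence fJ: "finite J" using fB finite_subset by auto
      have "(\<Prod>v\<in>J. of_bool (S \<inter> ?N {v} = {}) :: int poly) = of_bool (\<forall>v\<in>J. S \<inter> ?N {v} = {})"
        using fJ by (induction J rule: finite_induct) auto
      also have "\<dots> = of_bool (S \<inter> ?N J = {})" by (simp only: closed_nbhd_disjoint[of S V E J])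
      finally show "(-1) ^ card J * (\<Prod>v\<in>J. of_bool (S \<inter> ?N {v} = {}) :: int poly)
         = (-1) ^ card J * of_bool (S \<inter> ?N J = {})" by simp
    qed
    finally show "(\<Prod>v\<in>B. 1 - of_bool (S \<inter> ?N {v} = {})) * ?X ^ card S
      = (\<Sum>J\<in>Pow B. (-1) ^ card J * of_bool (S \<inter> ?N J = {}) * ?X ^ card S)"
      by (simp add: sum_distrib_right)
  qed
  also have "\<dots> = (\<Sum>J\<in>Pow B. \<Sum>S\<in>Pow V. (-1) ^ card J * of_bool (S \<inter> ?N J = {}) * ?X ^ card S)"
    by (rule sum.swap)
  also have "\<dots> = (\<Sum>J\<in>Pow B. (-1) ^ card J * [:1, 1:] ^ (card V - card (?N J)))"
  proof (rule sum.cong[OF refl])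
    fix J assume J: "J \<in> Pow B"
    have sub: "?N J \<subseteq> V" using NV J BV by auto
    have "(\<Sum>S\<in>Pow V. (-1) ^ card J * of_bool (S \<inter> ?N J = {}) * ?X ^ card S)
        = (-1) ^ card J * (\<Sum>S\<in>Pow V. of_bool (S \<inter> ?N J = {}) * ?X ^ card S)"
      by (simp add: sum_distrib_left mult.assoc)
    also have "(\<Sum>S\<in>Pow V. of_bool (S \<inter> ?N J = {}) * ?X ^ card S)
       = (\<Sum>S\<in>{S\<in>Pow V. S \<inter> ?N J = {}}. ?X ^ card S)"
      by (rule sum_of_bool_filter[of "Pow V" "\<lambda>S. S \<inter> ?N J = {}"]) (simp add: fin)
    also have "{S\<in>Pow V. S \<inter> ?N J = {}} = Pow (V - ?N J)" by auto
    also have "(\<Sum>S\<in>Pow (V - ?N J). ?X ^ card S) = (1 + ?X) ^ card (V - ?N J)"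
      using fin by (simp add: pow_sum_subsets)
    also have "card (V - ?N J) = card V - card (?N J)"
      using sub fin by (simp add: card_Diff_subset finite_subset)
    also have "(1 + ?X) = [:1,1:]" by (simp add: one_pCons)
    finally show "(\<Sum>S\<in>Pow V. (-1) ^ card J * of_bool (S \<inter> ?N J = {}) * ?X ^ card S)
       = (-1) ^ card J * [:1, 1:] ^ (card V - card (?N J))" .
  qed
  finally show ?thesis .
qed


lemma dom_iff_all:
  assumes "simple_graph V E" "S \<subseteq> V"
  shows "dominating V E S \<longleftrightarrow> (\<forall>v\<in>V. S \<inter> closed_nbhd V E {v} \<noteq> {})"
  using assms unfolding simple_graph_def dominating_def closed_nbhd_def by blast

theorem corollary5:
  fixes V :: "'a set" and E :: "'a \<Rightarrow> 'a \<Rightarrow> bool" and A :: "'a set"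
  assumes "simple_graph V E"
    and "V \<noteq> {}"
    and no_isolated_vertex: "\<forall>v\<in>V. \<exists>u. E v u"
    and no_isolated_edge: "\<not> (\<exists>u v. E u v \<and> degree V E u = 1 \<and> degree V E v = 1)"
    and "A \<subseteq> V"
    and "\<forall>a\<in>A. \<exists>w. E a w \<and> degree V E w = 1"
  shows "dom_poly V E
           = (\<Sum>J\<in>Pow (V - A). (-1) ^ card J * [:1, 1:] ^ (card V - card (closed_nbhd V E J)))
         \<and> dom_poly V E
           = (\<Sum>J\<in>{J. J \<subseteq> V - A \<and> card J \<le> card V - min_degree V E}.
                (-1) ^ card J * ([:1, 1:] ^ (card V - card (closed_nbhd V E J)) - 1))"
proof -
  note G = assms(1)[unfolded simple_graph_def]
  have fin: "finite V" using G by blast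
  have Ein: "\<And>u v. E u v \<Longrightarrow> u \<in> V \<and> v \<in> V" using G by blast
  have Esym: "\<And>u v. E u v \<Longrightarrow> E v u" using G by blast
  have leaf_nb: "{u\<in>V. E w u} = {a}" if "E a w" "degree V E w = 1" for a w
  proof -
    have "card {u\<in>V. E w u} = 1" using that(2) by (simp add: degree_def)
    then obtain x where x: "{u\<in>V. E w u} = {x}" by (rule card_1_singletonE)
    have "a \<in> {u\<in>V. E w u}" using that(1) Ein Esym by blast
    thus ?thesis using x by auto
  qed
  have K: "\<exists>w. E a w \<and> w \<notin> A \<and> closed_nbhd V E {w} \<subseteq> closed_nbhd V E {a}" if "a \<in> A" for a
  proof -
    obtain w where w: "E a w" "degree V E w = 1" using assms(6) \<open>a \<in> A\<close> by blast
    have nb: "{u\<in>V. E w u} = {a}" by (rule leaf_nb[OF w])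
    have "w \<notin> A"
    proof
      assume "w \<in> A"
      then obtain w' where w': "E w w'" "degree V E w' = 1" using assms(6) by blast
      have "w' \<in> {u\<in>V. E w u}" using w'(1) Ein by blast
      hence "w' = a" using nb by auto
      thus False using no_isolated_edge w w' by blast
    qed
    moreover have "closed_nbhd V E {w} \<subseteq> closed_nbhd V E {a}"
      using nb w(1) Ein unfolding closed_nbhd_def by auto
    ultimately show ?thesis using w by blast
  qed
  have char: "dominating V E S \<longleftrightarrow> (\<forall>v\<in>V - A. S \<inter> closed_nbhd V E {v} \<noteq> {})"
    if "S \<subseteq> V" for S
  proof -
    have "(\<forall>v\<in>V. S \<inter> closed_nbhd V E {v} \<noteq> {}) \<longleftrightarrow> (\<forall>v\<in>V - A. S \<inter> closed_nbhd V E {v} \<noteq> {})"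
    proof
      assume "\<forall>v\<in>V. S \<inter> closed_nbhd V E {v} \<noteq> {}" thus "\<forall>v\<in>V - A. S \<inter> closed_nbhd V E {v} \<noteq> {}" by blast
    next
      assume H: "\<forall>v\<in>V - A. S \<inter> closed_nbhd V E {v} \<noteq> {}"
      show "\<forall>v\<in>V. S \<inter> closed_nbhd V E {v} \<noteq> {}"
      proof
        fix v assume "v \<in> V"
        show "S \<inter> closed_nbhd V E {v} \<noteq> {}"
        proof (cases "v \<in> A")
          case True
          then obtain w where "E v w" "w \<notin> A" "closed_nbhd V E {w} \<subseteq> closed_nbhd V E {v}"
            using K by blast
          moreover have "w \<in> V" using \<open>E v w\<close> Ein by blast
          ultimately show ?thesis using H by blast
        next
          case False thus ?thesis using H \<open>v \<in> V\<close> by blast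
        qed
      qed
    qed
    thus ?thesis using dom_iff_all[OF assms(1) that] by simp
  qed
  have NV: "\<And>J. J \<subseteq> V \<Longrightarrow> closed_nbhd V E J \<subseteq> V" unfolding closed_nbhd_def by auto
  have P1: "dom_poly V E = (\<Sum>J\<in>Pow (V - A). (-1) ^ card J * [:1, 1:] ^ (card V - card (closed_nbhd V E J)))"
    by (rule dom_general[OF fin _ char NV]) auto
  have VA: "V - A \<noteq> {}"
  proof -
    obtain v where "v \<in> V" using assms(2) by blast
    show ?thesis
    proof (cases "v \<in> A")
      case True
      then obtain w where "E v w" "w \<notin> A" using K by blast
      thus ?thesis using Ein by blast
    qed (use \<open>v \<in> V\<close> in blast)
  qed
  have fB: "finite (V - A)" using fin by simp
  have alt0: "(\<Sum>J\<in>Pow (V - A). (-1) ^ card J :: int poly) = 0"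
  proof -
    have "(\<Sum>J\<in>Pow (V - A). (-1) ^ card J :: int poly) = (1 + (-1)) ^ card (V - A)"
      by (rule pow_sum_subsets[OF fB, symmetric])
    also have "card (V - A) > 0" using VA fB by (simp add: card_gt_0_iff)
    hence "(1 + (-1::int poly)) ^ card (V - A) = 0" by simp
    finally show ?thesis .
  qed
  let ?P = "\<lambda>J. [:1, 1:] ^ (card V - card (closed_nbhd V E J)) :: int poly"
  have "(\<Sum>J\<in>Pow (V - A). (-1) ^ card J * (?P J - 1))
      = (\<Sum>J\<in>Pow (V - A). (-1) ^ card J * ?P J) - (\<Sum>J\<in>Pow (V - A). (-1) ^ card J)"
    by (simp add: right_diff_distrib sum_subtractf)
  also have "\<dots> = dom_poly V E" using alt0 P1 by simp
  finally have eq2: "(\<Sum>J\<in>Pow (V - A). (-1) ^ card J * (?P J - 1)) = dom_poly V E" .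
  have "(\<Sum>J\<in>{J. J \<subseteq> V - A \<and> card J \<le> card V - min_degree V E}. (-1) ^ card J * (?P J - 1))
      = (\<Sum>J\<in>Pow (V - A). (-1) ^ card J * (?P J - 1))"
  proof (rule sum.mono_neutral_left)
    show "finite (Pow (V - A))" using fB by simp
    show "{J. J \<subseteq> V - A \<and> card J \<le> card V - min_degree V E} \<subseteq> Pow (V - A)" by auto
    show "\<forall>J\<in>Pow (V - A) - {J. J \<subseteq> V - A \<and> card J \<le> card V - min_degree V E}.
            (-1) ^ card J * (?P J - 1) = 0"
    proof
      fix J assume J: "J \<in> Pow (V - A) - {J. J \<subseteq> V - A \<and> card J \<le> card V - min_degree V E}"
      hence JV: "J \<subseteq> V" and big: "card J > card V - min_degree V E" by auto
      have fJ: "finite J" using JV fin finite_subset by blast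
      have "V \<subseteq> closed_nbhd V E J"
      proof
        fix v assume v: "v \<in> V"
        show "v \<in> closed_nbhd V E J"
        proof (cases "v \<in> J")
          case True thus ?thesis by (simp add: closed_nbhd_def)
        next
          case False
          let ?M = "{u\<in>V. E v u}"
          have "min_degree V E \<le> degree V E v"
            unfolding min_degree_def using fin v by (simp add: Min_le)
          hence dM: "min_degree V E \<le> card ?M" by (simp add: degree_def)
          have "?M \<inter> J \<noteq> {}"
          proof
            assume "?M \<inter> J = {}"
            hence "?M \<subseteq> V - J" by auto
            hence "card ?M \<le> card (V - J)" using fin by (simp add: card_mono)
            also have "card (V - J) = card V - card J" using JV fJ by (simp add: card_Diff_subset)
            moreover have "card J \<le> card V" using JV fin by (simp add: card_mono)
            ultimately show False using dM big by linarith
          qed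
          then obtain j where "j \<in> J" "E v j" by blast
          thus ?thesis using Esym v unfolding closed_nbhd_def by blast
        qed
      qed
      hence "closed_nbhd V E J = V" using NV[OF JV] by blast
      thus "(-1) ^ card J * (?P J - 1) = 0" by simp
    qed
  qed
  with eq2 P1 show ?thesis by simp
qed

end
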